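(* Let $X\neq\{0\}$ be a real normed space and let $\mathcal{G}\subset C(\mathbb{R})$ be fundamental in $C(\mathbb{R})$. Let $\mathcal{F}\subset X^*$ be such that $\{f/\|f\|: f\in\mathcal{F},\ f\neq0\}$ is dense in the unit sphere $\{f\in X^*:\|f\|=1\}$ with respect to the operator norm. Then $\mathcal{G}\circ\mathcal{F}=\{g\circ f: g\in\mathcal{G},\ f\in\mathcal{F}\}$ is fundamental in $C(X)$.
   Context: $X^*$ is the space of bounded linear functionals on $X$ with the operator norm $\|f\|=\sup_{\|x\|\le1}|f(x)|$. For a normed space $Y$, a subset $S\subset C(Y)$ (continuous real functions on $Y$) is called fundamental if its linear span is dense in $C(Y)$ in the sense of uniform convergence on compact sets: for every compact $K\subset Y$, every $h\in C(Y)$ and every $\varepsilon>0$ there is $s$ in the span of $S$ with $\sup_{x\in K}|h(x)-s(x)|<\varepsilon$. *)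

theory Defs
  imports "HOL-Analysis.Analysis"
begin

definition fun_span :: "('a \<Rightarrow> real) set \<Rightarrow> ('a \<Rightarrow> real) set" where
  "fun_span S = {s. \<exists>n (c::nat \<Rightarrow> real) g. (\<forall>i<n. g i \<in> S) \<and> s = (\<lambda>x. \<Sum>i<n. c i * g i x)}"

definition fundamental :: "('a::topological_space \<Rightarrow> real) set \<Rightarrow> bool" where
  "fundamental S \<longleftrightarrow> (\<forall>g\<in>S. continuous_on UNIV g) \<and>
     (\<forall>K h \<epsilon>. compact K \<and> continuous_on UNIV h \<and> \<epsilon> > 0 \<longrightarrow>
        (\<exists>s\<in>fun_span S. \<forall>x\<in>K. \<bar>h x - s x\<bar> < \<epsilon>))"

end

theory Submission
  imports Defs
begin


definition goodH :: "('a::real_normed_vector \<times> real) set \<Rightarrow> bool" where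
  "goodH H \<longleftrightarrow> (0,0) \<in> H \<and> (\<forall>x a y b. (x,a)\<in>H \<longrightarrow> (y,b)\<in>H \<longrightarrow> (x+y,a+b)\<in>H) \<and>
     (\<forall>x a c. (x,a)\<in>H \<longrightarrow> (c *\<^sub>R x, c*a)\<in>H) \<and> (\<forall>x a. (x,a)\<in>H \<longrightarrow> a \<le> norm x)"

lemma goodH_fun:
  assumes "goodH H" "(x,a)\<in>H" "(x,b)\<in>H" shows "a = b"
proof -
  have "((-1) *\<^sub>R x, -b) \<in> H" using assms unfolding goodH_def by (metis mult_minus1)
  then have "(x + (-1) *\<^sub>R x, a + -b) \<in> H" using assms unfolding goodH_def by blast
  then have z: "(0, a - b) \<in> H" by simp
  have "c * (a - b) \<le> 0" for c
  proof -
    have "(c *\<^sub>R 0, c * (a-b)) \<in> H" using z assms(1) unfolding goodH_def by blast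
    then show ?thesis using assms(1) unfolding goodH_def by fastforce
  qed
  from this[of 1] this[of "-1"] show ?thesis by simp
qed

lemma goodH_extend:
  fixes H :: "('a::real_normed_vector \<times> real) set"
  assumes g: "goodH H" and nx: "\<forall>a. (x,a) \<notin> H"
  shows "\<exists>H'. goodH H' \<and> H \<subseteq> H' \<and> H' \<noteq> H"
proof -
  define L where "L = {a - norm (m - x) | m a. (m,a) \<in> H}"
  have add: "(m,a)\<in>H \<Longrightarrow> (n,b)\<in>H \<Longrightarrow> (m+n,a+b)\<in>H" for m a n b using g unfolding goodH_def by blast
  have sc: "(m,a)\<in>H \<Longrightarrow> (c *\<^sub>R m, c*a)\<in>H" for m a c using g unfolding goodH_def by blast
  have dom: "(m,a)\<in>H \<Longrightarrow> a \<le> norm m" for m a using g unfolding goodH_def by blast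
  have z0: "(0,0) \<in> H" using g unfolding goodH_def by blast
  have key: "(m,a)\<in>H \<Longrightarrow> (n,b)\<in>H \<Longrightarrow> a - norm (m - x) \<le> norm (n + x) - b" for m a n b
  proof -
    assume "(m,a)\<in>H" "(n,b)\<in>H"
    then have "a + b \<le> norm (m + n)" using add dom by blast
    also have "norm (m + n) \<le> norm (m - x) + norm (n + x)"
      using norm_triangle_ineq[of "m - x" "n + x"] by simp
    finally show ?thesis by simp
  qed
  define c where "c = Sup L"
  have Lne: "L \<noteq> {}" using z0 unfolding L_def by blast
  have Lbdd: "bdd_above L" unfolding L_def bdd_above_def
    using key[OF _ z0] by fastforce
  have c1: "(m,a)\<in>H \<Longrightarrow> a - norm (m - x) \<le> c" for m a
    unfolding c_def by (rule cSup_upper[OF _ Lbdd]) (auto simp: L_def)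
  have c2: "(n,b)\<in>H \<Longrightarrow> c \<le> norm (n + x) - b" for n b
    unfolding c_def by (rule cSup_least[OF Lne]) (auto simp: L_def intro: key)
  define H' where "H' = {(m + t *\<^sub>R x, a + t * c) | m a t. (m,a) \<in> H}"
  have "goodH H'"
    unfolding goodH_def
  proof (intro conjI allI impI)
    show "(0,0) \<in> H'" unfolding H'_def using z0 by force
  next
    fix y1 a1 y2 a2 assume "(y1,a1)\<in>H'" "(y2,a2)\<in>H'"
    then obtain m1 b1 t1 m2 b2 t2 where "(m1,b1)\<in>H" "(m2,b2)\<in>H"
      "y1 = m1 + t1 *\<^sub>R x" "a1 = b1 + t1 * c" "y2 = m2 + t2 *\<^sub>R x" "a2 = b2 + t2 * c"
      unfolding H'_def by blast
    then have "(y1+y2, a1+a2) = ((m1+m2) + (t1+t2) *\<^sub>R x, (b1+b2) + (t1+t2)*c) \<and> (m1+m2,b1+b2)\<in>H"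
      using add[of m1 b1 m2 b2] by (simp add: algebra_simps)
    then show "(y1+y2, a1+a2) \<in> H'" unfolding H'_def by blast
  next
    fix y a r assume "(y,a)\<in>H'"
    then obtain m b t where "(m,b)\<in>H" "y = m + t *\<^sub>R x" "a = b + t * c"
      unfolding H'_def by blast
    then have "(r *\<^sub>R y, r*a) = (r *\<^sub>R m + (r*t) *\<^sub>R x, r*b + (r*t)*c) \<and> (r *\<^sub>R m, r*b)\<in>H"
      using sc[of m b r] by (simp add: algebra_simps)
    then show "(r *\<^sub>R y, r*a) \<in> H'" unfolding H'_def by blast
  next
    fix y a assume "(y,a)\<in>H'"
    then obtain m b t where mb: "(m,b)\<in>H" and y: "y = m + t *\<^sub>R x" and a: "a = b + t * c"
      unfolding H'_def by blast
    show "a \<le> norm y"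
    proof (cases "t = 0")
      case True then show ?thesis using dom mb y a by simp
    next
      case False
      show ?thesis
      proof (cases "t > 0")
        case True
        have "c \<le> norm ((1/t) *\<^sub>R m + x) - (1/t)*b" using c2[OF sc[OF mb, of "1/t"]] .
        then have "t * c \<le> t * (norm ((1/t) *\<^sub>R m + x) - (1/t)*b)"
          by (rule mult_left_mono) (use True in simp)
        also have "\<dots> = t * norm ((1/t) *\<^sub>R m + x) - b" using True by (simp add: right_diff_distrib)
        finally have i: "t * c \<le> t * norm ((1/t) *\<^sub>R m + x) - b" .
        have "t * norm ((1/t) *\<^sub>R m + x) = norm (t *\<^sub>R ((1/t) *\<^sub>R m + x))" using True by simp
        also have "t *\<^sub>R ((1/t) *\<^sub>R m + x) = y" using True y by (simp add: algebra_simps)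
        finally show ?thesis using a i by linarith
      next
        case False
        with \<open>t \<noteq> 0\<close> have tn: "t < 0" by simp
        define s where "s = -t"
        have s: "s > 0" using tn s_def by simp
        have "(1/s)*b - norm ((1/s) *\<^sub>R m - x) \<le> c" using c1[OF sc[OF mb, of "1/s"]] .
        then have "s * ((1/s)*b - norm ((1/s) *\<^sub>R m - x)) \<le> s * c"
          by (rule mult_left_mono) (use s in simp)
        then have "b - s * norm ((1/s) *\<^sub>R m - x) \<le> s * c" using s by (simp add: right_diff_distrib)
        moreover have "s * norm ((1/s) *\<^sub>R m - x) = norm (s *\<^sub>R ((1/s) *\<^sub>R m - x))" using s by simp
        moreover have "s *\<^sub>R ((1/s) *\<^sub>R m - x) = y" using s y s_def by (simp add: algebra_simps)
        ultimately have "b - norm y \<le> s * c" by simp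
        moreover have "a = b - s * c" using a s_def by simp
        ultimately show ?thesis by linarith
      qed
    qed
  qed
  moreover have "H \<subseteq> H'" unfolding H'_def by force
  moreover have "H' \<noteq> H"
  proof -
    have "(x, c) = (0 + 1 *\<^sub>R x, 0 + 1 * c)" by simp
    then have "(x, c) \<in> H'" unfolding H'_def using z0 by blast
    then show "H' \<noteq> H" using nx by blast
  qed
  ultimately show ?thesis by blast
qed

lemma hahn_banach_point:
  fixes z :: "'a::real_normed_vector"
  shows "\<exists>\<phi>. bounded_linear \<phi> \<and> \<phi> z = norm z \<and> (\<forall>x. \<bar>\<phi> x\<bar> \<le> norm x)"
proof -
  define A where "A = {H::('a \<times> real) set. goodH H \<and> (z, norm z) \<in> H}"
  define H0 where "H0 = {(t *\<^sub>R z, t * norm z) | t. True}"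
  have mem: "(t *\<^sub>R z, t * norm z) \<in> H0" for t unfolding H0_def by blast
  have memD: "p \<in> H0 \<Longrightarrow> \<exists>t. p = (t *\<^sub>R z, t * norm z)" for p unfolding H0_def by blast
  have H0: "H0 \<in> A" unfolding A_def goodH_def
  proof (intro CollectI conjI allI impI)
    show "(0,0) \<in> H0" using mem[of 0] by simp
    show "(z, norm z) \<in> H0" using mem[of 1] by simp
  next
    fix x a y b assume "(x,a) \<in> H0" "(y,b) \<in> H0"
    then obtain t1 t2 where "x = t1 *\<^sub>R z" "a = t1 * norm z" "y = t2 *\<^sub>R z" "b = t2 * norm z"
      using memD by blast
    then show "(x+y,a+b) \<in> H0" using mem[of "t1+t2"] by (simp add: algebra_simps)
  next
    fix x a c assume "(x,a) \<in> H0"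
    then obtain t1 where "x = t1 *\<^sub>R z" "a = t1 * norm z" using memD by blast
    then show "(c *\<^sub>R x, c*a) \<in> H0" using mem[of "c*t1"] by (simp add: algebra_simps)
  next
    fix x a assume "(x,a) \<in> H0"
    then obtain t1 where "x = t1 *\<^sub>R z" "a = t1 * norm z" using memD by blast
    then show "a \<le> norm x" by (simp add: mult_right_mono)
  qed
  have "\<forall>C\<in>chains A. \<exists>U\<in>A. \<forall>X\<in>C. X \<subseteq> U"
  proof
    fix C assume C: "C \<in> chains A"
    show "\<exists>U\<in>A. \<forall>X\<in>C. X \<subseteq> U"
    proof (cases "C = {}")
      case True then show ?thesis using H0 by blast
    next
      case False
      have CA: "C \<subseteq> A" and ch: "\<forall>X\<in>C. \<forall>Y\<in>C. X \<subseteq> Y \<or> Y \<subseteq> X"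
        using C unfolding chains_def chain_subset_def by auto
      have "\<Union>C \<in> A" unfolding A_def goodH_def
      proof (intro CollectI conjI allI impI)
        show "(0,0) \<in> \<Union>C" using False CA unfolding A_def goodH_def by blast
        show "(z, norm z) \<in> \<Union>C" using False CA unfolding A_def by blast
      next
        fix x a y b assume "(x,a) \<in> \<Union>C" "(y,b) \<in> \<Union>C"
        then obtain X Y where XY: "X\<in>C" "Y\<in>C" "(x,a)\<in>X" "(y,b)\<in>Y" by blast
        then have "\<exists>W\<in>C. (x,a)\<in>W \<and> (y,b)\<in>W" using ch by blast
        then obtain W where "W\<in>C" "(x,a)\<in>W" "(y,b)\<in>W" by blast
        then show "(x+y,a+b) \<in> \<Union>C" using CA unfolding A_def goodH_def by blast
      next
        fix x a c assume "(x,a) \<in> \<Union>C"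
        then show "(c *\<^sub>R x, c*a) \<in> \<Union>C" using CA unfolding A_def goodH_def by blast
      next
        fix x a assume "(x,a) \<in> \<Union>C"
        then show "a \<le> norm x" using CA unfolding A_def goodH_def by blast
      qed
      then show ?thesis by blast
    qed
  qed
  from Zorn_Lemma2[OF this] obtain M where MA: "M \<in> A" and Mmax: "\<forall>X\<in>A. M \<subseteq> X \<longrightarrow> X = M" by blast
  have gM: "goodH M" and zM: "(z, norm z) \<in> M" using MA unfolding A_def by auto
  have tot: "\<exists>a. (x,a) \<in> M" for x
  proof (rule ccontr)
    assume "\<not> ?thesis"
    then obtain H' where "goodH H'" "M \<subseteq> H'" "H' \<noteq> M" using goodH_extend[OF gM] by blast
    moreover then have "H' \<in> A" using zM unfolding A_def by blast
    ultimately show False using Mmax by blast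
  qed
  define \<phi> where "\<phi> x = (THE a. (x,a) \<in> M)" for x
  have phiM: "(x, \<phi> x) \<in> M" for x
    unfolding \<phi>_def using tot[of x] goodH_fun[OF gM] by (metis theI)
  have phiu: "(x,a) \<in> M \<Longrightarrow> \<phi> x = a" for x a using goodH_fun[OF gM phiM] by blast
  have padd: "\<phi> (x + y) = \<phi> x + \<phi> y" for x y
    using gM phiM[of x] phiM[of y] phiu unfolding goodH_def by blast
  have psc: "\<phi> (c *\<^sub>R x) = c * \<phi> x" for c x
    using gM phiM[of x] phiu unfolding goodH_def by blast
  have pb: "\<bar>\<phi> x\<bar> \<le> norm x" for x
  proof -
    have "\<phi> x \<le> norm x" using gM phiM[of x] unfolding goodH_def by blast
    moreover have "- \<phi> x \<le> norm x"
    proof -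
      have "\<phi> (-x) \<le> norm (-x)" using gM phiM[of "-x"] unfolding goodH_def by blast
      then show ?thesis using psc[of "-1" x] by simp
    qed
    ultimately show ?thesis by simp
  qed
  have "bounded_linear \<phi>"
    by (rule bounded_linear_intro[of _ 1]) (use padd psc pb in auto)
  then show ?thesis using phiu[OF zM] pb by blast
qed



lemma fs_zero: "(\<lambda>x. 0) \<in> fun_span S"
  unfolding fun_span_def by (rule CollectI, rule exI[of _ 0]) simp

lemma fs_cons:
  assumes "g \<in> S" "s \<in> fun_span S"
  shows "(\<lambda>x. c * g x + s x) \<in> fun_span S"
proof -
  obtain n d h where h: "\<forall>i<(n::nat). h i \<in> S" and s: "s = (\<lambda>x. \<Sum>i<n. d i * h i x)"
    using assms(2) unfolding fun_span_def by blast
  define d' where "d' = d(n := c)"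
  define h' where "h' = h(n := g)"
  have "\<forall>i<Suc n. h' i \<in> S" using h assms(1) unfolding h'_def by (auto simp: less_Suc_eq)
  moreover have "(\<lambda>x. c * g x + s x) = (\<lambda>x. \<Sum>i<Suc n. d' i * h' i x)"
    unfolding s d'_def h'_def by (auto simp: fun_eq_iff)
  ultimately show ?thesis unfolding fun_span_def by blast
qed

lemma fs_induct[consumes 1, case_names zero cons]:
  assumes "s \<in> fun_span S" "P (\<lambda>x. 0)"
    and "\<And>c g s. g \<in> S \<Longrightarrow> s \<in> fun_span S \<Longrightarrow> P s \<Longrightarrow> P (\<lambda>x. c * g x + s x)"
  shows "P s"
proof -
  obtain n d h where h: "\<forall>i<(n::nat). h i \<in> S" and s: "s = (\<lambda>x. \<Sum>i<n. d i * h i x)"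
    using assms(1) unfolding fun_span_def by blast
  have "(\<lambda>x. \<Sum>i<n. d i * h i x) \<in> fun_span S \<and> P (\<lambda>x. \<Sum>i<n. d i * h i x)" using h
  proof (induction n)
    case 0 then show ?case using fs_zero[of S] assms(2) by simp
  next
    case (Suc n)
    then have IH: "(\<lambda>x. \<Sum>i<n. d i * h i x) \<in> fun_span S \<and> P (\<lambda>x. \<Sum>i<n. d i * h i x)" by simp
    have hn: "h n \<in> S" using Suc.prems by simp
    have eq: "(\<lambda>x. \<Sum>i<Suc n. d i * h i x) = (\<lambda>x. d n * h n x + (\<Sum>i<n. d i * h i x))"
      by (simp add: add.commute)
    show ?case unfolding eq using IH hn fs_cons assms(3) by blast
  qed
  then show ?thesis using s by simp
qed

lemma fs_base: "g \<in> S \<Longrightarrow> g \<in> fun_span S"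
  using fs_cons[OF _ fs_zero, of g S 1] by simp

lemma fs_lin:
  assumes "t1 \<in> fun_span T" "t2 \<in> fun_span T"
  shows "(\<lambda>x. c * t1 x + t2 x) \<in> fun_span T"
  using assms(1) assms(2)
proof (induction arbitrary: t2 c rule: fs_induct)
  case zero then show ?case by simp
next
  case (cons d g r)
  have "(\<lambda>x. c * r x + t2 x) \<in> fun_span T" using cons by blast
  then have "(\<lambda>x. (c*d) * g x + (c * r x + t2 x)) \<in> fun_span T" using fs_cons cons(1) by blast
  moreover have "(\<lambda>x. c * (d * g x + r x) + t2 x) = (\<lambda>x. (c*d) * g x + (c * r x + t2 x))"
    by (simp add: algebra_simps)
  ultimately show ?case by simp
qed

lemma fs_mult1:
  assumes S: "\<And>g h. g \<in> S \<Longrightarrow> h \<in> S \<Longrightarrow> (\<lambda>x. g x * h x) \<in> S"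
    and "s \<in> fun_span S" "g \<in> S"
  shows "(\<lambda>x. g x * s x) \<in> fun_span S"
  using assms(2)
proof (induction rule: fs_induct)
  case zero then show ?case using fs_zero by simp
next
  case (cons c h r)
  have "(\<lambda>x. c * (g x * h x) + g x * r x) \<in> fun_span S" using fs_cons S[OF assms(3) cons(1)] cons(3) by blast
  moreover have "(\<lambda>x. g x * (c * h x + r x)) = (\<lambda>x. c * (g x * h x) + g x * r x)"
    by (simp add: algebra_simps)
  ultimately show ?case by simp
qed

lemma fs_mult:
  assumes S: "\<And>g h. g \<in> S \<Longrightarrow> h \<in> S \<Longrightarrow> (\<lambda>x. g x * h x) \<in> S"
    and "s1 \<in> fun_span S" "s2 \<in> fun_span S"
  shows "(\<lambda>x. s1 x * s2 x) \<in> fun_span S"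
  using assms(2)
proof (induction rule: fs_induct)
  case zero then show ?case using fs_zero by simp
next
  case (cons c g r)
  have "(\<lambda>x. c * (g x * s2 x) + r x * s2 x) \<in> fun_span S"
    using fs_lin fs_mult1[OF S assms(3) cons(1)] cons(3) by blast
  moreover have "(\<lambda>x. (c * g x + r x) * s2 x) = (\<lambda>x. c * (g x * s2 x) + r x * s2 x)"
    by (simp add: algebra_simps)
  ultimately show ?case by simp
qed

lemma approx_span:
  assumes A: "\<forall>g\<in>S. \<forall>e>0. \<exists>t\<in>fun_span T. \<forall>x\<in>K. \<bar>g x - t x\<bar> < e"
    and "s \<in> fun_span S"
  shows "\<forall>e>0. \<exists>t\<in>fun_span T. \<forall>x\<in>K. \<bar>s x - t x\<bar> < e"
  using assms(2)
proof (induction rule: fs_induct)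
  case zero then show ?case using fs_zero by force
next
  case (cons c g r)
  show ?case
  proof (intro allI impI)
    fix e :: real assume e: "e > 0"
    obtain t1 where t1: "t1 \<in> fun_span T" "\<forall>x\<in>K. \<bar>g x - t1 x\<bar> < e / (2 * (\<bar>c\<bar> + 1))"
    proof -
      have pos: "e / (2 * (\<bar>c\<bar> + 1)) > 0" using e by (simp add: add_pos_nonneg)
      show ?thesis using A cons(1) pos that by blast
    qed
    obtain t2 where t2: "t2 \<in> fun_span T" "\<forall>x\<in>K. \<bar>r x - t2 x\<bar> < e / 2"
      using cons(3) e by (meson half_gt_zero)
    have "\<forall>x\<in>K. \<bar>(c * g x + r x) - (c * t1 x + t2 x)\<bar> < e"
    proof
      fix x assume x: "x \<in> K"
      have "\<bar>(c * g x + r x) - (c * t1 x + t2 x)\<bar> \<le> \<bar>c\<bar> * \<bar>g x - t1 x\<bar> + \<bar>r x - t2 x\<bar>"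
        by (metis abs_mult abs_triangle_ineq add_diff_add right_diff_distrib)
      also have "\<bar>c\<bar> * \<bar>g x - t1 x\<bar> \<le> \<bar>c\<bar> * (e / (2 * (\<bar>c\<bar> + 1)))"
        using t1(2) x by (intro mult_left_mono) (auto intro: less_imp_le)
      also have "\<bar>c\<bar> * (e / (2 * (\<bar>c\<bar> + 1))) \<le> e / 2"
        using e by (simp add: field_simps)
      finally have "\<bar>(c * g x + r x) - (c * t1 x + t2 x)\<bar> \<le> e / 2 + \<bar>r x - t2 x\<bar>" by simp
      moreover have "\<bar>r x - t2 x\<bar> < e / 2" using t2(2) x by blast
      ultimately show "\<bar>(c * g x + r x) - (c * t1 x + t2 x)\<bar> < e" by linarith
    qed
    then show "\<exists>t\<in>fun_span T. \<forall>x\<in>K. \<bar>(c * g x + r x) - t x\<bar> < e"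
      using fs_lin[OF t1(1) t2(1), of c] by (intro bexI[of _ "\<lambda>x. c * t1 x + t2 x"]) auto
  qed
qed

lemma exp_lip: "\<bar>exp a - exp b\<bar> \<le> exp (max a b) * \<bar>a - (b::real)\<bar>"
proof -
  have *: "exp v - exp u \<le> exp v * (v - u)" if "u \<le> v" for u v :: real
  proof -
    have "1 + (u - v) \<le> exp (u - v)" by (rule exp_ge_add_one_self)
    then have "exp v * (1 + (u - v)) \<le> exp v * exp (u - v)" by simp
    also have "exp v * exp (u - v) = exp u" by (simp add: exp_diff)
    finally show ?thesis by (simp add: algebra_simps)
  qed
  show ?thesis
  proof (cases "a \<le> b")
    case True then show ?thesis using *[OF True] by (simp add: max_def abs_if)
  next
    case False then show ?thesis using *[of b a] by (simp add: max_def abs_if)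
  qed
qed



theorem theorem4p3p3:
  fixes G :: "(real \<Rightarrow> real) set"
    and F :: "('a::real_normed_vector \<Rightarrow> real) set"
  assumes nontriv: "\<exists>x::'a. x \<noteq> 0"
    and G_fund: "fundamental G"
    and F_dual: "\<forall>f\<in>F. bounded_linear f"
    and F_dense: "\<forall>\<phi>::'a \<Rightarrow> real. bounded_linear \<phi> \<and> onorm \<phi> = 1 \<longrightarrow>
        (\<forall>\<epsilon>>0. \<exists>f\<in>F. f \<noteq> (\<lambda>x. 0) \<and> onorm (\<lambda>x. \<phi> x - f x / onorm f) < \<epsilon>)"
  shows "fundamental {g \<circ> f | g f. g \<in> G \<and> f \<in> F}"
proof -
  define T where "T = {g \<circ> f | g f. g \<in> G \<and> f \<in> F}"
  define E0 where "E0 = {(\<lambda>x. exp (\<phi> x)) | \<phi>::'a\<Rightarrow>real. bounded_linear \<phi>}"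
  have Gc: "\<forall>g\<in>G. continuous_on UNIV g"
    and Gapp: "\<And>K h \<epsilon>. compact K \<Longrightarrow> continuous_on UNIV h \<Longrightarrow> \<epsilon> > 0 \<Longrightarrow>
        (\<exists>s\<in>fun_span G. \<forall>x\<in>K. \<bar>h x - s x\<bar> < \<epsilon>)"
    using G_fund unfolding fundamental_def by auto
  have cont: "\<forall>t\<in>T. continuous_on UNIV t"
  proof
    fix t assume "t \<in> T"
    then obtain g f where t: "t = g \<circ> f" and g: "g \<in> G" and f: "f \<in> F" unfolding T_def by blast
    have "continuous_on UNIV f" using F_dual f linear_continuous_on by blast
    moreover have "continuous_on (f ` UNIV) g" using Gc g continuous_on_subset by blast
    ultimately show "continuous_on UNIV t" unfolding t by (rule continuous_on_compose)
  qed
  have Bp: "\<exists>t\<in>fun_span T. \<forall>x\<in>K. \<bar>u (f x) - t x\<bar> < e"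
    if f: "f \<in> F" and u: "continuous_on UNIV u" and K: "compact K" and e: "e > 0" for f u K e
  proof -
    have "compact (f ` K)"
      by (rule compact_continuous_image[OF linear_continuous_on[OF bspec[OF F_dual f]] K])
    then obtain s where s: "s \<in> fun_span G" "\<forall>y\<in>f ` K. \<bar>u y - s y\<bar> < e"
      using Gapp u e by blast
    have "(\<lambda>x. s (f x)) \<in> fun_span T" using s(1)
    proof (induction rule: fs_induct)
      case zero then show ?case by (simp add: fs_zero)
    next
      case (cons c g r)
      have "g \<circ> f \<in> T" unfolding T_def using cons(1) f by blast
      from fs_cons[OF this cons(3), of c] show ?case by simp
    qed
    then show ?thesis using s(2) by (intro bexI[of _ "\<lambda>x. s (f x)"]) auto
  qed
  obtain z :: 'a where z: "z \<noteq> 0" using nontriv by blast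
  obtain \<phi>0 :: "'a \<Rightarrow> real" where p0: "bounded_linear \<phi>0" "\<phi>0 z = norm z" "\<forall>x. \<bar>\<phi>0 x\<bar> \<le> norm x"
    using hahn_banach_point by blast
  have on0: "onorm \<phi>0 = 1"
  proof (rule antisym)
    show "onorm \<phi>0 \<le> 1" using p0(3) by (intro onorm_bound) auto
    have "norm (\<phi>0 z) \<le> onorm \<phi>0 * norm z" by (rule onorm[OF p0(1)])
    then have "norm z \<le> onorm \<phi>0 * norm z" using p0(2) by simp
    then show "1 \<le> onorm \<phi>0" using z by simp
  qed
  have B: "\<forall>g\<in>E0. \<forall>e>0. \<exists>t\<in>fun_span T. \<forall>x\<in>K. \<bar>g x - t x\<bar> < e" if K: "compact K" for K
  proof (intro ballI allI impI)
    fix g e assume "g \<in> E0" and e: "(e::real) > 0"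
    then obtain \<phi> where \<phi>: "bounded_linear \<phi>" and g: "g = (\<lambda>x. exp (\<phi> x))" unfolding E0_def by blast
    obtain Bd where Bd: "Bd > 0" "\<forall>x\<in>K. norm x \<le> Bd" using compact_imp_bounded[OF K] bounded_pos by blast
    obtain \<psi> M where \<psi>: "bounded_linear \<psi>" "onorm \<psi> = 1" and M: "M \<ge> 0" and phiM: "\<forall>x. \<phi> x = M * \<psi> x"
    proof (cases "onorm \<phi> = 0")
      case True
      then have "\<forall>x. \<phi> x = 0 * \<phi>0 x" using onorm_eq_0[OF \<phi>] by simp
      then show ?thesis using that[OF p0(1) on0, of 0] by simp
    next
      case False
      define M where "M = onorm \<phi>"
      have Mp: "M > 0" using False onorm_pos_le[OF \<phi>] unfolding M_def by simp
      have bl: "bounded_linear (\<lambda>x. (1/M) *\<^sub>R \<phi> x)"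
      proof -
        have "bounded_linear (\<lambda>x. \<phi> x / M)" by (rule bounded_linear_compose[OF bounded_linear_divide \<phi>])
        then show ?thesis by simp
      qed
      have "onorm (\<lambda>x. (1/M) *\<^sub>R \<phi> x) = 1" using onorm_scaleR[OF \<phi>, of "1/M"] Mp unfolding M_def by simp
      moreover have "\<forall>x. \<phi> x = M * ((1/M) *\<^sub>R \<phi> x)" using Mp by simp
      ultimately show ?thesis using that[OF bl _ _, of M] Mp by simp
    qed
    define L where "L = exp (M * Bd + 1)"
    have L1: "L \<ge> 1" unfolding L_def using M Bd by simp
    define e' where "e' = min 1 (e/4)"
    have e': "e' > 0" "e' \<le> 1" "e' \<le> e/4" using e unfolding e'_def by auto
    define \<delta> where "\<delta> = e' / (L * (M * Bd + 1))"
    have MB: "M * Bd \<ge> 0" using M Bd by simp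
    have \<delta>: "\<delta> > 0" unfolding \<delta>_def using e' L1 MB by (simp add: add_nonneg_pos)
    obtain f where f: "f \<in> F" "f \<noteq> (\<lambda>x. 0)" and fd: "onorm (\<lambda>x. \<psi> x - f x / onorm f) < \<delta>"
      using F_dense \<psi> \<delta> by blast
    define N where "N = onorm f"
    have fbl: "bounded_linear f" using F_dual f by blast
    have Np: "N > 0"
    proof -
      have "N \<noteq> 0" using onorm_eq_0[OF fbl] f(2) unfolding N_def by auto
      then show ?thesis using onorm_pos_le[OF fbl] unfolding N_def by simp
    qed
    have dbl: "bounded_linear (\<lambda>x. \<psi> x - f x / onorm f)"
      by (intro bounded_linear_sub \<psi>(1) bounded_linear_compose[OF bounded_linear_divide fbl])
    define u where "u = (\<lambda>s. exp (M * s / N))"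
    have u: "continuous_on UNIV u" unfolding u_def using Np by (intro continuous_intros) auto
    obtain t where t: "t \<in> fun_span T" "\<forall>x\<in>K. \<bar>u (f x) - t x\<bar> < e/2"
      using Bp[OF f(1) u K, of "e/2"] e by auto
    have "\<forall>x\<in>K. \<bar>g x - t x\<bar> < e"
    proof
      fix x assume x: "x \<in> K"
      define a where "a = M * \<psi> x"
      define b where "b = M * (f x / N)"
      have d1: "\<bar>\<psi> x - f x / N\<bar> \<le> \<delta> * Bd"
      proof -
        have "norm (\<psi> x - f x / onorm f) \<le> onorm (\<lambda>x. \<psi> x - f x / onorm f) * norm x"
          by (rule onorm[OF dbl])
        also have "\<dots> \<le> \<delta> * Bd" using fd Bd(2) x \<delta>
          by (intro mult_mono) (auto intro: onorm_pos_le[OF dbl])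
        finally show ?thesis unfolding N_def by simp
      qed
      have "\<bar>a - b\<bar> = M * \<bar>\<psi> x - f x / N\<bar>"
      proof -
        have "a - b = M * (\<psi> x - f x / N)" unfolding a_def b_def by (simp add: right_diff_distrib)
        then show ?thesis using M by (simp add: abs_mult)
      qed
      also have "\<dots> \<le> M * (\<delta> * Bd)" using d1 M by (rule mult_left_mono)
      finally have ab: "\<bar>a - b\<bar> \<le> \<delta> * (M * Bd)" by (simp add: algebra_simps)
      have dMB: "\<delta> * (M * Bd) \<le> \<delta> * (M * Bd + 1)" using \<delta> by simp
      have h1: "M * Bd + 1 \<noteq> 0" using MB by linarith
      have h2: "L \<noteq> 0" using L1 by linarith
      have dMB1: "\<delta> * (M * Bd + 1) = e' / L"
      proof -
        have "\<delta> * (M * Bd + 1) = e' * (M * Bd + 1) / (L * (M * Bd + 1))" unfolding \<delta>_def by simp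
        also have "\<dots> = e' / L" by (rule mult_divide_mult_cancel_right[OF h1])
        finally show ?thesis .
      qed
      have "e' / L \<le> 1" using e' L1 by (simp add: divide_le_eq_1)
      have psx: "\<bar>\<psi> x\<bar> \<le> Bd"
      proof -
        have "norm (\<psi> x) \<le> onorm \<psi> * norm x" by (rule onorm[OF \<psi>(1)])
        then have "\<bar>\<psi> x\<bar> \<le> norm x" using \<psi>(2) by simp
        moreover have "norm x \<le> Bd" using Bd(2) x by blast
        ultimately show ?thesis by linarith
      qed
      have "\<bar>a\<bar> \<le> M * Bd" unfolding a_def using psx M by (simp add: abs_mult mult_left_mono)
      then have "max a b \<le> M * Bd + 1" using ab dMB dMB1 \<open>e' / L \<le> 1\<close> by (simp add: abs_le_iff max_def)
      then have eL: "exp (max a b) \<le> L" unfolding L_def by simp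
      have "\<bar>exp a - exp b\<bar> \<le> exp (max a b) * \<bar>a - b\<bar>" by (rule exp_lip)
      also have "\<dots> \<le> L * (\<delta> * (M * Bd + 1))"
        using eL ab dMB L1 by (intro mult_mono) auto
      also have "\<dots> = e'" using dMB1 L1 by simp
      finally have "\<bar>exp a - exp b\<bar> \<le> e/4" using e' by simp
      moreover have "g x = exp a" unfolding g a_def using phiM by simp
      moreover have "u (f x) = exp b" unfolding u_def b_def by simp
      moreover have "\<bar>u (f x) - t x\<bar> < e/2" using t(2) x by blast
      ultimately show "\<bar>g x - t x\<bar> < e" by linarith
    qed
    then show "\<exists>t\<in>fun_span T. \<forall>x\<in>K. \<bar>g x - t x\<bar> < e" using t(1) by blast
  qed
  have E0mult: "(\<lambda>x. g x * h x) \<in> E0" if gh: "g \<in> E0" "h \<in> E0" for g h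
  proof -
    obtain \<phi> \<psi> where "bounded_linear \<phi>" "g = (\<lambda>x. exp (\<phi> x))" "bounded_linear \<psi>" "h = (\<lambda>x. exp (\<psi> x))"
      using gh unfolding E0_def by blast
    moreover then have "bounded_linear (\<lambda>x. \<phi> x + \<psi> x)" by (intro bounded_linear_add)
    ultimately show ?thesis unfolding E0_def
      by (intro CollectI exI[of _ "\<lambda>x. \<phi> x + \<psi> x"]) (auto simp: exp_add)
  qed
  show ?thesis unfolding fundamental_def T_def[symmetric]
  proof (intro conjI allI impI)
    show "\<forall>g\<in>T. continuous_on UNIV g" by (rule cont)
  next
    fix K :: "'a set" and h :: "'a \<Rightarrow> real" and \<epsilon> :: real
    assume a: "compact K \<and> continuous_on UNIV h \<and> 0 < \<epsilon>"
    then have K: "compact K" and h: "continuous_on UNIV h" and e: "\<epsilon> > 0" by auto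
    have "\<exists>r. r \<in> fun_span E0 \<and> (\<forall>x\<in>K. \<bar>h x - r x\<bar> < \<epsilon>/2)"
    proof (rule Stone_Weierstrass_HOL[of K "\<lambda>r. r \<in> fun_span E0" h "\<epsilon>/2"])
      show "compact K" by fact
      show "(\<lambda>x. c) \<in> fun_span E0" for c
      proof -
        have "(\<lambda>x. exp ((\<lambda>x::'a. 0::real) x)) \<in> E0" unfolding E0_def
          by (intro CollectI exI[of _ "\<lambda>x::'a. 0::real"]) (simp add: bounded_linear_zero)
        from fs_cons[OF this fs_zero, of c] show ?thesis by simp
      qed
      show "continuous_on K r" if "r \<in> fun_span E0" for r
        using that
      proof (induction rule: fs_induct)
        case zero then show ?case by (intro continuous_intros)
      next
        case (cons c g r)
        then obtain \<phi> where "bounded_linear \<phi>" "g = (\<lambda>x. exp (\<phi> x))" unfolding E0_def by blast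
        then have "continuous_on K g" using linear_continuous_on by (auto intro!: continuous_intros)
        then show ?case using cons(3) by (intro continuous_intros)
      qed
      show "(\<lambda>x. r x + s x) \<in> fun_span E0" if "r \<in> fun_span E0 \<and> s \<in> fun_span E0" for r s
        using fs_lin[of r E0 s 1] that by simp
      show "(\<lambda>x. r x * s x) \<in> fun_span E0" if "r \<in> fun_span E0 \<and> s \<in> fun_span E0" for r s
        using fs_mult[OF E0mult] that by blast
      show "\<exists>r. r \<in> fun_span E0 \<and> r x \<noteq> r y" if "x \<in> K \<and> y \<in> K \<and> x \<noteq> y" for x y
      proof -
        obtain \<phi> :: "'a \<Rightarrow> real" where p: "bounded_linear \<phi>" "\<phi> (x - y) = norm (x - y)"
          using hahn_banach_point by blast
        have "\<phi> x - \<phi> y \<noteq> 0" using p that linear_diff[OF bounded_linear.linear[OF p(1)]] by simp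
        then have "exp (\<phi> x) \<noteq> exp (\<phi> y)" by simp
        moreover have "(\<lambda>x. exp (\<phi> x)) \<in> fun_span E0" using p(1) unfolding E0_def
          by (intro fs_base CollectI exI[of _ \<phi>]) simp
        ultimately show ?thesis by blast
      qed
      show "continuous_on K h" using h continuous_on_subset by blast
      show "0 < \<epsilon>/2" using e by simp
    qed
    then obtain r where r: "r \<in> fun_span E0" "\<forall>x\<in>K. \<bar>h x - r x\<bar> < \<epsilon>/2" by blast
    obtain t where t: "t \<in> fun_span T" "\<forall>x\<in>K. \<bar>r x - t x\<bar> < \<epsilon>/2"
      using approx_span[OF B[OF K] r(1)] e by (meson half_gt_zero)
    have "\<forall>x\<in>K. \<bar>h x - t x\<bar> < \<epsilon>"
    proof
      fix x assume "x \<in> K"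
      then have "\<bar>h x - r x\<bar> < \<epsilon>/2" "\<bar>r x - t x\<bar> < \<epsilon>/2" using r t by auto
      then show "\<bar>h x - t x\<bar> < \<epsilon>" by linarith
    qed
    then show "\<exists>s\<in>fun_span T. \<forall>x\<in>K. \<bar>h x - s x\<bar> < \<epsilon>" using t(1) by blast
  qed
qed

end
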